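(* Assume (H1)–(H9) with (H7) in the form (H7-WFL), all as described in the context. Then there exists an event $\Omega_1\subseteq\Omega$ of full probability such that for all $\omega\in\Omega_1$, $$\tilde A(\omega)=\overline A:=\max(\mu^\star_L,\mu^\star_R).$$
   Context: $(\Omega,\mathbf F,P)$ probability space; $H:\mathbb R\times\mathbb R\times\Omega\to\mathbb R$ measurable; for Borel $V$, $\mathbf F(V)$ is the $\sigma$-algebra generated by $\omega\mapsto H(p,y,\omega)$, $y\in V$, $p\in\mathbb R$. $(\tau_z)_{z\in\mathbb R}$ is an ergodic group of measure-preserving maps of $\Omega$ ($\tau_{x+z}=\tau_x\circ\tau_z$; invariant events have probability 0 or 1). (H1) $H$ Lipschitz in $p$ uniformly in $(y,\omega)$. (H2) $-c_0|p+\gamma|\le H\le C_0|p+\gamma|$ for some $c_0,C_0,\gamma>0$. (H3) $\lim_{|p|\to\infty}\inf_{(y,\omega)}H=+\infty$. (H4) $|H(p,y,\omega)-H(p,x,\omega)|\le w(|x-y|(1+|p|))$ for a modulus $w$. (H5) $H$ convex in $p$. (H6) $H(p,y,\omega)\ge H(0,y,\omega)$. (H7-WFL) $H(p,y,\omega)=\phi(y)H_L(p,y,\omega)+(1-\phi(y))H_R(p,y,\omega)$ with $\phi\in C^\infty$ non-increasing, $\phi=1$ on $(-\infty,-1]$, $\phi=0$ on $[1,\infty)$. (H8) $H_\alpha(p,y+z,\omega)=H_\alpha(p,y,\tau_z\omega)$ for $\alpha\in\{L,R\}$. (H9) $\mathbf F(U),\mathbf F(V)$ independent whenever $d(U,V)\ge1$.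 Definitions: $\tilde A(\omega)=\inf\{\mu:\ \exists v$ globally Lipschitz with $H(Dv,y,\omega)\le\mu$ in $\mathbb R\}$; $\mu^\star_\alpha$ is the almost surely constant value of $\inf\{\mu:\ \exists v$ globally Lipschitz with $H_\alpha(Dv,y,\omega)\le\mu$ in $\mathbb R\}$ (inequalities in the viscosity sense). *)

theory Defs
  imports "HOL-Probability.Probability"
begin

definition visc_subsol :: "(real \<Rightarrow> real \<Rightarrow> real) \<Rightarrow> (real \<Rightarrow> real) \<Rightarrow> real \<Rightarrow> bool" where
  "visc_subsol G v mu \<longleftrightarrow> continuous_on UNIV v \<and>
     (\<forall>phi phi' y. (\<forall>x. (phi has_real_derivative phi' x) (at x)) \<and> continuous_on UNIV phi' \<and>
        (\<exists>e>0. \<forall>x. \<bar>x - y\<bar> < e \<longrightarrow> v x - phi x \<le> v y - phi y)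
        \<longrightarrow> G (phi' y) y \<le> mu)"

definition crit_value :: "(real \<Rightarrow> real \<Rightarrow> real) \<Rightarrow> real" where
  "crit_value G = Inf {mu. \<exists>v. (\<exists>L. lipschitz_on L UNIV v) \<and> visc_subsol G v mu}"

definition modulus :: "(real \<Rightarrow> real) \<Rightarrow> bool" where
  "modulus w \<longleftrightarrow> w 0 = 0 \<and> (\<forall>r\<ge>0. w r \<ge> 0) \<and> mono_on {0..} w \<and> (w \<longlongrightarrow> 0) (at_right 0)"

definition smooth_fun :: "(real \<Rightarrow> real) \<Rightarrow> bool" where
  "smooth_fun f \<longleftrightarrow> (\<forall>n x. ((deriv ^^ n) f) differentiable (at x))"

definition gen_sigma :: "'w measure \<Rightarrow> (real \<Rightarrow> real \<Rightarrow> 'w \<Rightarrow> real) \<Rightarrow> real set \<Rightarrow> 'w set set" where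
  "gen_sigma M H V = sigma_sets (space M)
     {(\<lambda>\<omega>. H p y \<omega>) -` B \<inter> space M | p y B. y \<in> V \<and> B \<in> sets borel}"

end

theory Submission
  imports Defs
begin


lemma crit_value_eq:
  fixes G :: "real \<Rightarrow> real \<Rightarrow> real"
  assumes mono0: "\<And>p y. G 0 y \<le> G p y"
    and cont: "continuous_on UNIV (\<lambda>y. G 0 y)"
    and bdd: "bdd_above (range (\<lambda>y. G 0 y))"
  shows "crit_value G = (SUP y. G 0 y)"
proof -
  have S: "{mu. \<exists>v. (\<exists>L. lipschitz_on L UNIV v) \<and> visc_subsol G v mu} = {mu. \<forall>y. G 0 y \<le> mu}"
  proof (intro set_eqI iffI; simp only: mem_Collect_eq)
    fix mu assume "\<exists>v. (\<exists>L. lipschitz_on L UNIV v) \<and> visc_subsol G v mu"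
    then obtain v where vs: "visc_subsol G v mu" by blast
    have vc: "continuous_on UNIV v" using vs unfolding visc_subsol_def by blast
    show "\<forall>y. G 0 y \<le> mu"
    proof (rule ccontr)
      assume "\<not> (\<forall>y. G 0 y \<le> mu)"
      then obtain y0 where y0: "mu < G 0 y0" using not_le by blast
      have "isCont (\<lambda>y. G 0 y) y0" using cont by (simp add: continuous_on_eq_continuous_at)
      then have "\<forall>r>0. \<exists>s>0. \<forall>x. x \<noteq> y0 \<and> norm (x - y0) < s \<longrightarrow> norm (G 0 x - G 0 y0) < r"
        unfolding isCont_def LIM_eq by blast
      then obtain \<delta> where dpos: "\<delta> > 0" and dd0: "\<And>x. x \<noteq> y0 \<and> norm (x - y0) < \<delta> \<Longrightarrow> norm (G 0 x - G 0 y0) < G 0 y0 - mu"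
        using y0 by (meson diff_gt_0_iff_gt)
      have dd: "\<And>y. dist y y0 < \<delta> \<Longrightarrow> dist (G 0 y) (G 0 y0) < G 0 y0 - mu"
        using dd0 y0 by (case_tac "y = y0") (auto simp: dist_norm)
      have Gbig: "\<And>y. \<bar>y - y0\<bar> < \<delta> \<Longrightarrow> mu < G 0 y"
      proof -
        fix y assume "\<bar>y - y0\<bar> < \<delta>"
        then have "dist (G 0 y) (G 0 y0) < G 0 y0 - mu" using dd by (simp add: dist_real_def)
        then show "mu < G 0 y" by (simp add: dist_real_def abs_less_iff)
      qed
      define d where "d = \<delta> / 2"
      have dpos2: "d > 0" "d < \<delta>" using dpos by (auto simp: d_def)
      define K where "K = (\<bar>v (y0 - d)\<bar> + \<bar>v (y0 + d)\<bar> + 2 * \<bar>v y0\<bar> + 1) / d^2"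
      define phi where "phi = (\<lambda>x. K * (x - y0)^2)"
      define phi' where "phi' = (\<lambda>x. 2 * K * (x - y0))"
      have Kd: "K * d^2 = \<bar>v (y0 - d)\<bar> + \<bar>v (y0 + d)\<bar> + 2 * \<bar>v y0\<bar> + 1"
        using dpos2 by (simp add: K_def)
      have der: "\<And>x. (phi has_real_derivative phi' x) (at x)"
        unfolding phi_def phi'_def by (auto intro!: derivative_eq_intros)
      have cphi': "continuous_on UNIV phi'" unfolding phi'_def by (intro continuous_intros)
      have cvp: "continuous_on {y0-d..y0+d} (\<lambda>x. v x - phi x)"
        unfolding phi_def by (intro continuous_intros continuous_on_subset[OF vc]) auto
      obtain y where yI: "y \<in> {y0-d..y0+d}" and ymax: "\<And>x. x \<in> {y0-d..y0+d} \<Longrightarrow> v x - phi x \<le> v y - phi y"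
        using continuous_attains_sup[OF compact_Icc _ cvp] dpos2 by force
      have "v y0 - phi y0 \<le> v y - phi y" using ymax dpos2 by auto
      hence ge: "v y0 \<le> v y - phi y" by (simp add: phi_def)
      have e1: "v (y0 - d) - phi (y0 - d) < v y0" using Kd unfolding phi_def by (simp add: power2_eq_square)
      have e2: "v (y0 + d) - phi (y0 + d) < v y0" using Kd unfolding phi_def by (simp add: power2_eq_square)
      have "y \<noteq> y0 - d" "y \<noteq> y0 + d" using e1 e2 ge by auto
      hence yin: "\<bar>y - y0\<bar> < d" using yI by auto
      have loc: "\<exists>e>0. \<forall>x. \<bar>x - y\<bar> < e \<longrightarrow> v x - phi x \<le> v y - phi y"
      proof (intro exI[of _ "d - \<bar>y - y0\<bar>"] conjI allI impI)
        show "0 < d - \<bar>y - y0\<bar>" using yin by simp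
        fix x assume "\<bar>x - y\<bar> < d - \<bar>y - y0\<bar>"
        hence "x \<in> {y0-d..y0+d}" by (auto simp: abs_if split: if_splits)
        thus "v x - phi x \<le> v y - phi y" by (rule ymax)
      qed
      have "G (phi' y) y \<le> mu" using vs der cphi' loc unfolding visc_subsol_def by blast
      moreover have "mu < G 0 y" using Gbig yin dpos2 by auto
      ultimately show False using mono0[of y "phi' y"] by linarith
    qed
  next
    fix mu assume A: "\<forall>y. G 0 y \<le> mu"
    have "visc_subsol G (\<lambda>_. 0) mu"
      unfolding visc_subsol_def
    proof (intro conjI allI impI)
      show "continuous_on UNIV (\<lambda>_::real. 0::real)" by simp
      fix phi phi' y
      assume h: "(\<forall>x. (phi has_real_derivative phi' x) (at x)) \<and> continuous_on UNIV phi' \<and>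
        (\<exists>e>0. \<forall>x. \<bar>x - y\<bar> < e \<longrightarrow> (0::real) - phi x \<le> 0 - phi y)"
      then obtain e where e: "e > 0" "\<forall>x. \<bar>x - y\<bar> < e \<longrightarrow> (0::real) - phi x \<le> 0 - phi y" by blast
      have "\<forall>x. \<bar>y - x\<bar> < e \<longrightarrow> phi y \<le> phi x" using e(2) by (auto simp: abs_minus_commute)
      hence "phi' y = 0" using DERIV_local_min[where f=phi and x=y and l="phi' y" and d=e] h e(1) by blast
      thus "G (phi' y) y \<le> mu" using A by simp
    qed
    moreover have "lipschitz_on 0 UNIV (\<lambda>_::real. 0::real)" by (simp add: lipschitz_on_def)
    ultimately show "\<exists>v. (\<exists>L. lipschitz_on L UNIV v) \<and> visc_subsol G v mu" by blast
  qed
  show ?thesis unfolding crit_value_def S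
    by (rule cInf_eq_minimum) (auto intro: cSUP_upper[OF _ bdd] cSUP_least)
qed




lemma all_from_rats:
  fixes g :: "real \<Rightarrow> real"
  assumes cg: "continuous_on UNIV g" and q: "\<forall>q\<in>S\<inter>\<rat>. g q \<le> c"
    and dense: "\<forall>y\<in>S. \<forall>e>0. \<exists>q\<in>S\<inter>\<rat>. dist q y < e"
  shows "\<forall>y\<in>S. g y \<le> c"
proof
  fix y assume y: "y \<in> S"
  have cl: "closed {y. g y \<le> c}" by (rule closed_Collect_le[OF cg continuous_on_const])
  have "\<forall>e>0. \<exists>z\<in>{y. g y \<le> c}. dist z y < e"
  proof (intro allI impI)
    fix e :: real assume "e > 0"
    then obtain r where r: "r \<in> S\<inter>\<rat>" "dist r y < e" using dense y by blast
    then have "r \<in> {y. g y \<le> c}" using q by blast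
    then show "\<exists>z\<in>{y. g y \<le> c}. dist z y < e" using r(2) by blast
  qed
  then have "y \<in> {y. g y \<le> c}" using closed_approachable[OF cl] by blast
  then show "g y \<le> c" by simp
qed

lemma dense_UNIV: "\<forall>y\<in>(UNIV::real set). \<forall>e>0. \<exists>q\<in>UNIV\<inter>\<rat>. dist q y < e"
proof (intro ballI allI impI)
  fix y :: real and e :: real assume "e > 0"
  then obtain r where "r \<in> \<rat>" "y - e < r" "r < y" using Rats_dense_in_real[of "y - e" y] by auto
  then show "\<exists>q\<in>UNIV\<inter>\<rat>. dist q y < e" by (intro bexI[of _ r]) (auto simp: dist_real_def)
qed

lemma dense_atMost: "\<forall>y\<in>{..t::real}. \<forall>e>0. \<exists>q\<in>{..t}\<inter>\<rat>. dist q y < e"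
proof (intro ballI allI impI)
  fix y :: real and e :: real assume "e > 0" "y \<in> {..t}"
  then obtain r where "r \<in> \<rat>" "y - e < r" "r < y" using Rats_dense_in_real[of "y - e" y] by auto
  then show "\<exists>q\<in>{..t}\<inter>\<rat>. dist q y < e" using \<open>y \<in> {..t}\<close>
    by (intro bexI[of _ r]) (auto simp: dist_real_def)
qed

lemma sup_event:
  fixes X :: "real \<Rightarrow> 'w \<Rightarrow> real"
  assumes meas: "\<And>y. X y \<in> borel_measurable M"
    and cont: "\<And>\<omega>. \<omega> \<in> space M \<Longrightarrow> continuous_on UNIV (\<lambda>y. X y \<omega>)"
    and bnd: "\<And>y \<omega>. \<omega> \<in> space M \<Longrightarrow> X y \<omega> \<le> b"
    and Sne: "S \<noteq> {}" and dense: "\<forall>y\<in>S. \<forall>e>0. \<exists>q\<in>S\<inter>\<rat>. dist q y < e"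
  shows "\<And>c. {\<omega>\<in>space M. (SUP y\<in>S. X y \<omega>) \<le> c} = {\<omega>\<in>space M. \<forall>y\<in>S. X y \<omega> \<le> c}"
    and "\<And>c. {\<omega>\<in>space M. (SUP y\<in>S. X y \<omega>) \<le> c} \<in> sets M"
    and "(\<lambda>\<omega>. SUP y\<in>S. X y \<omega>) \<in> borel_measurable M"
proof -
  obtain y0 where "y0 \<in> S" using Sne by blast
  then obtain q0 where "q0 \<in> S \<inter> \<rat>" using dense by (meson zero_less_one)
  then have SQ: "S \<inter> \<rat> \<noteq> {}" by blast
  have bd: "bdd_above ((\<lambda>y. X y \<omega>) ` S)" if "\<omega> \<in> space M" for \<omega>
    using bnd[OF that] by (intro bdd_aboveI2) 
  show eq: "\<And>c. {\<omega>\<in>space M. (SUP y\<in>S. X y \<omega>) \<le> c} = {\<omega>\<in>space M. \<forall>y\<in>S. X y \<omega> \<le> c}"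
  proof (intro set_eqI)
    fix c \<omega>
    show "\<omega> \<in> {\<omega>\<in>space M. (SUP y\<in>S. X y \<omega>) \<le> c} \<longleftrightarrow> \<omega> \<in> {\<omega>\<in>space M. \<forall>y\<in>S. X y \<omega> \<le> c}"
    proof (cases "\<omega> \<in> space M")
      case True
      show ?thesis using cSUP_le_iff[OF Sne bd[OF True], of c] True by simp
    qed simp
  qed
  show ev: "\<And>c. {\<omega>\<in>space M. (SUP y\<in>S. X y \<omega>) \<le> c} \<in> sets M"
  proof -
    fix c
    have "{\<omega>\<in>space M. \<forall>y\<in>S. X y \<omega> \<le> c} = (\<Inter>q\<in>S\<inter>\<rat>. {\<omega>\<in>space M. X q \<omega> \<le> c})"
    proof (intro set_eqI iffI)
      fix \<omega> assume a: "\<omega> \<in> (\<Inter>q\<in>S\<inter>\<rat>. {\<omega>\<in>space M. X q \<omega> \<le> c})"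
      then have sp: "\<omega> \<in> space M" using SQ by blast
      have q: "\<forall>q\<in>S\<inter>\<rat>. X q \<omega> \<le> c" using a by blast
      show "\<omega> \<in> {\<omega>\<in>space M. \<forall>y\<in>S. X y \<omega> \<le> c}"
        using all_from_rats[OF cont[OF sp] q dense] sp by blast
    next
      fix \<omega> assume "\<omega> \<in> {\<omega>\<in>space M. \<forall>y\<in>S. X y \<omega> \<le> c}"
      then show "\<omega> \<in> (\<Inter>q\<in>S\<inter>\<rat>. {\<omega>\<in>space M. X q \<omega> \<le> c})" by blast
    qed
    also have "\<dots> \<in> sets M"
    proof (rule sets.countable_INT'[OF countable_Int2[OF countable_rat] SQ], rule image_subsetI)
      fix q show "{\<omega>\<in>space M. X q \<omega> \<le> c} \<in> sets M" using meas[of q] unfolding borel_measurable_iff_le by blast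
    qed
    finally show "{\<omega>\<in>space M. (SUP y\<in>S. X y \<omega>) \<le> c} \<in> sets M" using eq by simp
  qed
  show "(\<lambda>\<omega>. SUP y\<in>S. X y \<omega>) \<in> borel_measurable M"
    unfolding borel_measurable_iff_le using ev by blast
qed


lemma AE_of_prob0:
  assumes P: "prob_space M" and N: "{\<omega>\<in>space M. \<not> Q \<omega>} \<in> sets M" "measure M {\<omega>\<in>space M. \<not> Q \<omega>} = 0"
  shows "AE \<omega> in M. Q \<omega>"
proof -
  interpret prob_space M by fact
  show ?thesis using N by (subst AE_iff_measurable[OF N(1) refl]) (simp add: emeasure_eq_measure)
qed

lemma le_of_eps:
  fixes x m :: real
  assumes "\<forall>n::nat. x \<le> m + inverse (real (Suc n))"
  shows "x \<le> m"
proof (rule ccontr)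
  assume "\<not> x \<le> m"
  then obtain n where "inverse (real (Suc n)) < x - m" using reals_Archimedean[of "x - m"] by auto
  then show False using assms[rule_format, of n] by simp
qed

lemma pw_eps: fixes y m :: real assumes h1: "\<forall>n::nat. y \<le> m + inverse (real (Suc n))"
      and h2: "\<forall>n::nat. m - inverse (real (Suc n)) < y" shows "y = m"
proof -
  have "y \<le> m" by (rule le_of_eps[OF h1])
  moreover have "m \<le> y"
  proof (rule le_of_eps, intro allI)
    fix n :: nat
    have "m - inverse (real (Suc n)) < y" using h2 by (rule spec)
    thus "m \<le> y + inverse (real (Suc n))" by linarith
  qed
  ultimately show "y = m" by (rule antisym)
qed

lemma ae_const:
  fixes Y :: "'w \<Rightarrow> real"
  assumes P: "prob_space M" and Ym: "Y \<in> borel_measurable M"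
    and bnd: "\<And>\<omega>. \<omega> \<in> space M \<Longrightarrow> a \<le> Y \<omega> \<and> Y \<omega> \<le> b"
    and zo: "\<And>c. measure M {\<omega>\<in>space M. Y \<omega> \<le> c} = 0 \<or> measure M {\<omega>\<in>space M. Y \<omega> \<le> c} = 1"
  shows "AE \<omega> in M. Y \<omega> = Inf {c. measure M {\<omega>\<in>space M. Y \<omega> \<le> c} = 1}"
proof -
  interpret prob_space M by fact
  define D where "D c = measure M {\<omega>\<in>space M. Y \<omega> \<le> c}" for c
  define C where "C = {c. D c = 1}"
  define m where "m = Inf C"
  have evs: "\<And>c. {\<omega>\<in>space M. Y \<omega> \<le> c} \<in> sets M" using Ym by (simp add: borel_measurable_iff_le)
  have "{\<omega>\<in>space M. Y \<omega> \<le> b} = space M" using bnd by auto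
  hence bC: "b \<in> C" by (simp add: C_def D_def prob_space)
  have lowC: "\<And>c. c \<in> C \<Longrightarrow> a \<le> c"
  proof (rule ccontr)
    fix c assume "c \<in> C" "\<not> a \<le> c"
    then have "{\<omega>\<in>space M. Y \<omega> \<le> c} = {}" using bnd by force
    then have "D c = 0" unfolding D_def by (metis measure_empty)
    then show False using \<open>c \<in> C\<close> by (simp add: C_def)
  qed
  have Cne: "C \<noteq> {}" using bC by auto
  have Cbdd: "bdd_below C" using lowC by (auto simp: bdd_below_def)
  have up: "\<And>c. m < c \<Longrightarrow> D c = 1"
  proof -
    fix c assume "m < c"
    then obtain c' where "c' \<in> C" "c' < c" using cInf_less_iff[OF Cne Cbdd] by (auto simp: m_def)
    then have "D c' \<le> D c" unfolding D_def by (intro finite_measure_mono evs) auto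
    moreover have "D c \<le> 1" by (simp add: D_def)
    ultimately show "D c = 1" using \<open>c' \<in> C\<close> by (simp add: C_def)
  qed
  have low: "\<And>c. c < m \<Longrightarrow> D c = 0"
  proof -
    fix c assume "c < m"
    have "D c \<noteq> 1"
    proof
      assume "D c = 1" then have "c \<in> C" by (simp add: C_def)
      then have "m \<le> c" unfolding m_def by (rule cInf_lower[OF _ Cbdd])
      then show False using \<open>c < m\<close> by simp
    qed
    then show "D c = 0" using zo[of c] by (simp add: D_def)
  qed
  have A1: "AE \<omega> in M. \<forall>n::nat. Y \<omega> \<le> m + inverse (real (Suc n))"
  proof (subst AE_all_countable, intro allI)
    fix n :: nat
    let ?c = "m + inverse (real (Suc n))"
    have eqN: "{\<omega>\<in>space M. \<not> Y \<omega> \<le> ?c} = space M - {\<omega>\<in>space M. Y \<omega> \<le> ?c}" by auto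
    have Dc: "D ?c = 1" by (rule up) simp
    have s1: "{\<omega>\<in>space M. \<not> Y \<omega> \<le> ?c} \<in> sets M" unfolding eqN by (intro sets.Diff sets.top evs)
    have s2: "measure M {\<omega>\<in>space M. \<not> Y \<omega> \<le> ?c} = 0"
      unfolding eqN using prob_compl[OF evs[of ?c]] Dc by (simp only: D_def)
    show "AE \<omega> in M. Y \<omega> \<le> ?c" by (rule AE_of_prob0[OF P s1 s2])
  qed
  have A2: "AE \<omega> in M. \<forall>n::nat. m - inverse (real (Suc n)) < Y \<omega>"
  proof (subst AE_all_countable, intro allI)
    fix n :: nat
    let ?c = "m - inverse (real (Suc n))"
    have eqN: "{\<omega>\<in>space M. \<not> ?c < Y \<omega>} = {\<omega>\<in>space M. Y \<omega> \<le> ?c}" by auto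
    have Dc: "D ?c = 0" by (rule low) simp
    have s1: "{\<omega>\<in>space M. \<not> ?c < Y \<omega>} \<in> sets M" unfolding eqN by (rule evs)
    have s2: "measure M {\<omega>\<in>space M. \<not> ?c < Y \<omega>} = 0"
      unfolding eqN using Dc by (simp only: D_def)
    show "AE \<omega> in M. ?c < Y \<omega>" by (rule AE_of_prob0[OF P s1 s2])
  qed
  have mm: "m = Inf {c. measure M {\<omega>\<in>space M. Y \<omega> \<le> c} = 1}"
    unfolding m_def C_def D_def ..
  have "AE \<omega> in M. (\<forall>n::nat. Y \<omega> \<le> m + inverse (real (Suc n))) \<and> (\<forall>n::nat. m - inverse (real (Suc n)) < Y \<omega>)"
    by (rule AE_conj_iff[THEN iffD2, OF conjI[OF A1 A2]])
  then have "AE \<omega> in M. Y \<omega> = m"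
    apply (rule AE_mp)
    apply (rule AE_I2)
    apply (intro impI)
    apply (erule conjE)
    apply (erule (1) pw_eps)
    done
  then show ?thesis unfolding mm .
qed



lemma stat_sup:
  fixes M :: "'w measure" and \<tau> :: "real \<Rightarrow> 'w \<Rightarrow> 'w" and X :: "real \<Rightarrow> 'w \<Rightarrow> real"
  assumes P: "prob_space M"
    and tau_meas: "\<And>z. \<tau> z \<in> M \<rightarrow>\<^sub>M M \<and> distr M M (\<tau> z) = M"
    and ergodic: "\<And>A. A \<in> sets M \<Longrightarrow> (\<forall>z. \<tau> z -` A \<inter> space M = A) \<Longrightarrow>
                    measure M A = 0 \<or> measure M A = 1"
    and stat: "\<And>y z \<omega>. \<omega> \<in> space M \<Longrightarrow> X (y + z) \<omega> = X y (\<tau> z \<omega>)"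
    and meas: "\<And>y. X y \<in> borel_measurable M"
    and cont: "\<And>\<omega>. \<omega> \<in> space M \<Longrightarrow> continuous_on UNIV (\<lambda>y. X y \<omega>)"
    and bnd: "\<And>y \<omega>. \<omega> \<in> space M \<Longrightarrow> a \<le> X y \<omega> \<and> X y \<omega> \<le> b"
  shows "\<exists>m. (AE \<omega> in M. (SUP y. X y \<omega>) = m) \<and> (AE \<omega> in M. (SUP y\<in>{..-1}. X y \<omega>) = m)"
proof -
  interpret prob_space M by fact
  define f where "f \<omega> = (SUP y. X y \<omega>)" for \<omega>
  define h where "h t \<omega> = (SUP y\<in>{..t}. X y \<omega>)" for t \<omega>
  have bndb: "\<And>y \<omega>. \<omega> \<in> space M \<Longrightarrow> X y \<omega> \<le> b" using bnd by blast
  have UNE: "(UNIV::real set) \<noteq> {}" by simp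
  have ANE: "\<And>t::real. {..t} \<noteq> {}" by auto
  note SU = sup_event[OF meas cont bndb UNE dense_UNIV]
  note SA = sup_event[OF meas cont bndb ANE dense_atMost]
  have tm: "\<And>z. \<tau> z \<in> M \<rightarrow>\<^sub>M M" using tau_meas by blast
  have tsp: "\<And>z \<omega>. \<omega> \<in> space M \<Longrightarrow> \<tau> z \<omega> \<in> space M" using tm measurable_space by metis
  have bdd: "\<And>\<omega> S. \<omega> \<in> space M \<Longrightarrow> bdd_above ((\<lambda>y. X y \<omega>) ` S)"
    using bndb by (intro bdd_aboveI2) 
  have finv: "\<And>z \<omega>. \<omega> \<in> space M \<Longrightarrow> f (\<tau> z \<omega>) = f \<omega>"
  proof -
    fix z \<omega> assume sp: "\<omega> \<in> space M"
    have "range (\<lambda>y. X y (\<tau> z \<omega>)) = range (\<lambda>y. X (y + z) \<omega>)" using stat[OF sp] by simp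
    also have "\<dots> = (\<lambda>y. X y \<omega>) ` range (\<lambda>y. y + z)" by (simp only: image_image)
    also have "range (\<lambda>y::real. y + z) = UNIV"
    proof (intro set_eqI iffI)
      fix x :: real show "x \<in> range (\<lambda>y. y + z)" by (rule image_eqI[of _ _ "x - z"]) auto
    qed simp
    finally show "f (\<tau> z \<omega>) = f \<omega>" by (simp add: f_def)
  qed
  have hshift: "\<And>t \<omega>. \<omega> \<in> space M \<Longrightarrow> h t \<omega> = h (-1) (\<tau> (t+1) \<omega>)"
  proof -
    fix t \<omega> assume sp: "\<omega> \<in> space M"
    have "(\<lambda>y. X y (\<tau> (t+1) \<omega>)) ` {..-1} = (\<lambda>y. X (y + (t+1)) \<omega>) ` {..-1}" using stat[OF sp] by simp
    also have "\<dots> = (\<lambda>y. X y \<omega>) ` ((\<lambda>y. y + (t+1)) ` {..-1})" by (simp only: image_image)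
    also have "(\<lambda>y::real. y + (t+1)) ` {..-1} = {..t}"
    proof (intro set_eqI iffI)
      fix x :: real assume "x \<in> {..t}"
      then show "x \<in> (\<lambda>y. y + (t+1)) ` {..-1}" by (intro image_eqI[of _ _ "x - (t+1)"]) auto
    qed auto
    finally show "h t \<omega> = h (-1) (\<tau> (t+1) \<omega>)" by (simp add: h_def)
  qed
  have fev: "\<And>c. {\<omega>\<in>space M. f \<omega> \<le> c} \<in> sets M" unfolding f_def by (rule SU(2))
  have hev: "\<And>c t. {\<omega>\<in>space M. h t \<omega> \<le> c} \<in> sets M" unfolding h_def by (rule SA(2))
  have zo: "\<And>c. measure M {\<omega>\<in>space M. f \<omega> \<le> c} = 0 \<or> measure M {\<omega>\<in>space M. f \<omega> \<le> c} = 1"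
  proof -
    fix c
    show "measure M {\<omega>\<in>space M. f \<omega> \<le> c} = 0 \<or> measure M {\<omega>\<in>space M. f \<omega> \<le> c} = 1"
    proof (rule ergodic[OF fev], intro allI set_eqI iffI)
      fix z \<omega> assume "\<omega> \<in> \<tau> z -` {\<omega> \<in> space M. f \<omega> \<le> c} \<inter> space M"
      then show "\<omega> \<in> {\<omega> \<in> space M. f \<omega> \<le> c}" using finv by auto
    next
      fix z \<omega> assume "\<omega> \<in> {\<omega> \<in> space M. f \<omega> \<le> c}"
      then show "\<omega> \<in> \<tau> z -` {\<omega> \<in> space M. f \<omega> \<le> c} \<inter> space M" using finv tsp by auto
    qed
  qed
  have heq: "\<And>c. measure M {\<omega>\<in>space M. h (-1) \<omega> \<le> c} = measure M {\<omega>\<in>space M. f \<omega> \<le> c}"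
  proof -
    fix c
    define B where "B = {\<omega>\<in>space M. h (-1) \<omega> \<le> c}"
    define A where "A n = {\<omega>\<in>space M. h (real n) \<omega> \<le> c}" for n :: nat
    have AB: "A n = \<tau> (real n + 1) -` B \<inter> space M" for n
      unfolding A_def B_def using hshift tsp by auto
    have mA: "measure M (A n) = measure M B" for n
    proof -
      have "measure M (A n) = measure (distr M M (\<tau> (real n + 1))) B"
        unfolding AB by (rule measure_distr[symmetric, OF tm]) (simp add: B_def hev)
      then show ?thesis using tau_meas by simp
    qed
    have Aall: "A n = {\<omega>\<in>space M. \<forall>y\<in>{..real n}. X y \<omega> \<le> c}" for n
      unfolding A_def h_def by (rule SA(1))
    have dec: "decseq A" unfolding decseq_def Aall by auto
    have rng: "range A \<subseteq> sets M" unfolding A_def using hev by blast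
    have inter: "(\<Inter>n. A n) = {\<omega>\<in>space M. f \<omega> \<le> c}"
    proof -
      have "(\<Inter>n. A n) = {\<omega>\<in>space M. \<forall>y. X y \<omega> \<le> c}"
      proof (intro set_eqI iffI)
        fix \<omega> assume a: "\<omega> \<in> (\<Inter>n. A n)"
        have "\<forall>y. X y \<omega> \<le> c"
        proof
          fix y :: real
          obtain n where "y \<le> real n" using real_arch_simple by blast
          then show "X y \<omega> \<le> c" using a unfolding Aall by auto
        qed
        then show "\<omega> \<in> {\<omega>\<in>space M. \<forall>y. X y \<omega> \<le> c}" using a unfolding Aall by auto
      qed (auto simp: Aall)
      also have "\<dots> = {\<omega>\<in>space M. f \<omega> \<le> c}" unfolding f_def using SU(1) by simp
      finally show ?thesis .
    qed
    have "(\<lambda>n. measure M (A n)) \<longlonglongrightarrow> measure M (\<Inter>n. A n)"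
      by (rule finite_Lim_measure_decseq[OF rng dec])
    then have "(\<lambda>n. measure M B) \<longlonglongrightarrow> measure M {\<omega>\<in>space M. f \<omega> \<le> c}" using mA inter by simp
    then have "measure M B = measure M {\<omega>\<in>space M. f \<omega> \<le> c}" by (rule LIMSEQ_const_iff[THEN iffD1])
    then show "measure M {\<omega>\<in>space M. h (-1) \<omega> \<le> c} = measure M {\<omega>\<in>space M. f \<omega> \<le> c}"
      by (simp add: B_def)
  qed
  have fm: "f \<in> borel_measurable M" unfolding f_def by (rule SU(3))
  have hm: "h (-1) \<in> borel_measurable M" unfolding h_def by (rule SA(3))
  have fb: "a \<le> f \<omega> \<and> f \<omega> \<le> b" if sp: "\<omega> \<in> space M" for \<omega>
  proof
    have "X 0 \<omega> \<le> f \<omega>" unfolding f_def by (rule cSUP_upper[OF _ bdd[OF sp]]) simp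
    then show "a \<le> f \<omega>" using bnd[OF sp, of 0] by linarith
    show "f \<omega> \<le> b" unfolding f_def using bndb[OF sp] by (intro cSUP_least) auto
  qed
  have hb: "a \<le> h (-1) \<omega> \<and> h (-1) \<omega> \<le> b" if sp: "\<omega> \<in> space M" for \<omega>
  proof
    have "X (-1) \<omega> \<le> h (-1) \<omega>" unfolding h_def by (rule cSUP_upper[OF _ bdd[OF sp]]) simp
    then show "a \<le> h (-1) \<omega>" using bnd[OF sp, of "-1"] by linarith
    show "h (-1) \<omega> \<le> b" unfolding h_def using bndb[OF sp] by (intro cSUP_least) auto
  qed
  have zoh: "\<And>c. measure M {\<omega>\<in>space M. h (-1) \<omega> \<le> c} = 0 \<or> measure M {\<omega>\<in>space M. h (-1) \<omega> \<le> c} = 1"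
    using zo heq by simp
  have AEf: "AE \<omega> in M. f \<omega> = Inf {c. measure M {\<omega>\<in>space M. f \<omega> \<le> c} = 1}"
    by (rule ae_const[OF P fm fb zo])
  have AEh: "AE \<omega> in M. h (-1) \<omega> = Inf {c. measure M {\<omega>\<in>space M. h (-1) \<omega> \<le> c} = 1}"
    by (rule ae_const[OF P hm hb zoh])
  then have AEh': "AE \<omega> in M. h (-1) \<omega> = Inf {c. measure M {\<omega>\<in>space M. f \<omega> \<le> c} = 1}"
    by (simp only: heq)
  show ?thesis using AEf AEh' unfolding f_def h_def by blast
qed



lemma modulus_cont:
  fixes g :: "real \<Rightarrow> real"
  assumes w: "modulus w" and b: "\<And>x y. \<bar>g x - g y\<bar> \<le> w \<bar>x - y\<bar>"
  shows "continuous_on UNIV g"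
  unfolding continuous_on_iff
proof (intro ballI allI impI)
  fix x :: real and e :: real assume e: "e > 0"
  have w0: "w 0 = 0" and lim: "(w \<longlongrightarrow> 0) (at_right 0)" using w unfolding modulus_def by auto
  have "eventually (\<lambda>r. dist (w r) 0 < e) (at_right 0)" by (rule tendstoD[OF lim e])
  then obtain d where d: "d > 0" "\<And>r. 0 < r \<Longrightarrow> r < d \<Longrightarrow> dist (w r) 0 < e"
    unfolding eventually_at_right_field by auto
  show "\<exists>d>0. \<forall>x'\<in>UNIV. dist x' x < d \<longrightarrow> dist (g x') (g x) < e"
  proof (intro exI[of _ d] conjI ballI impI)
    show "d > 0" by fact
    fix x' assume "dist x' x < d"
    show "dist (g x') (g x) < e"
    proof (cases "x' = x")
      case True then show ?thesis using e by simp
    next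
      case False
      then have "0 < \<bar>x' - x\<bar>" "\<bar>x' - x\<bar> < d" using \<open>dist x' x < d\<close> by (auto simp: dist_real_def)
      then have "dist (w \<bar>x' - x\<bar>) 0 < e" using d(2) by blast
      then have "w \<bar>x' - x\<bar> < e" by (simp add: dist_real_def abs_less_iff)
      then show ?thesis using b[of x' x] by (simp add: dist_real_def)
    qed
  qed
qed

theorem theorem4p11:
  fixes M :: "'w measure"
    and H HL HR :: "real \<Rightarrow> real \<Rightarrow> 'w \<Rightarrow> real"
    and \<tau> :: "real \<Rightarrow> 'w \<Rightarrow> 'w"
    and c0 C0 \<gamma> :: real and w \<phi> :: "real \<Rightarrow> real"
  assumes P: "prob_space M"
    and meas: "(\<lambda>(p, y, \<omega>). H p y \<omega>) \<in> borel_measurable (borel \<Otimes>\<^sub>M borel \<Otimes>\<^sub>M M)"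
    and measL: "(\<lambda>(p, y, \<omega>). HL p y \<omega>) \<in> borel_measurable (borel \<Otimes>\<^sub>M borel \<Otimes>\<^sub>M M)"
    and measR: "(\<lambda>(p, y, \<omega>). HR p y \<omega>) \<in> borel_measurable (borel \<Otimes>\<^sub>M borel \<Otimes>\<^sub>M M)"
    and tau_meas: "\<And>z. \<tau> z \<in> M \<rightarrow>\<^sub>M M \<and> distr M M (\<tau> z) = M"
    and tau_group: "\<And>x z \<omega>. \<omega> \<in> space M \<Longrightarrow> \<tau> (x + z) \<omega> = \<tau> x (\<tau> z \<omega>)"
    and tau_zero: "\<And>\<omega>. \<omega> \<in> space M \<Longrightarrow> \<tau> 0 \<omega> = \<omega>"
    and ergodic: "\<And>A. A \<in> sets M \<Longrightarrow> (\<forall>z. \<tau> z -` A \<inter> space M = A) \<Longrightarrow>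
                    measure M A = 0 \<or> measure M A = 1"
    and H1: "\<exists>L. \<forall>p q y \<omega>. \<omega> \<in> space M \<longrightarrow> \<bar>H p y \<omega> - H q y \<omega>\<bar> \<le> L * \<bar>p - q\<bar>"
    and H2: "c0 > 0" "C0 > 0" "\<gamma> > 0"
      "\<And>p y \<omega>. \<omega> \<in> space M \<Longrightarrow> - c0 * \<bar>p + \<gamma>\<bar> \<le> H p y \<omega> \<and> H p y \<omega> \<le> C0 * \<bar>p + \<gamma>\<bar>"
    and H3: "\<forall>K. \<exists>R. \<forall>p y \<omega>. \<omega> \<in> space M \<and> \<bar>p\<bar> \<ge> R \<longrightarrow> H p y \<omega> \<ge> K"
    and H4: "modulus w"
      "\<And>p x y \<omega>. \<omega> \<in> space M \<Longrightarrow> \<bar>H p y \<omega> - H p x \<omega>\<bar> \<le> w (\<bar>x - y\<bar> * (1 + \<bar>p\<bar>))"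
    and H5: "\<And>y \<omega>. \<omega> \<in> space M \<Longrightarrow> convex_on UNIV (\<lambda>p. H p y \<omega>)"
    and H6: "\<And>p y \<omega>. \<omega> \<in> space M \<Longrightarrow> H p y \<omega> \<ge> H 0 y \<omega>"
    and H7: "smooth_fun \<phi>" "antimono \<phi>" "\<And>y. y \<le> -1 \<Longrightarrow> \<phi> y = 1" "\<And>y. y \<ge> 1 \<Longrightarrow> \<phi> y = 0"
      "\<And>p y \<omega>. \<omega> \<in> space M \<Longrightarrow> H p y \<omega> = \<phi> y * HL p y \<omega> + (1 - \<phi> y) * HR p y \<omega>"
    and H8: "\<And>p y z \<omega>. \<omega> \<in> space M \<Longrightarrow> HL p (y + z) \<omega> = HL p y (\<tau> z \<omega>)"
      "\<And>p y z \<omega>. \<omega> \<in> space M \<Longrightarrow> HR p (y + z) \<omega> = HR p y (\<tau> z \<omega>)"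
    and H9: "\<And>U V. U \<in> sets borel \<Longrightarrow> V \<in> sets borel \<Longrightarrow> (\<forall>u\<in>U. \<forall>v\<in>V. \<bar>u - v\<bar> \<ge> 1) \<Longrightarrow>
               prob_space.indep_set M (gen_sigma M H U) (gen_sigma M H V)"
  shows "\<exists>\<mu>L \<mu>R.
           (AE \<omega> in M. crit_value (\<lambda>p y. HL p y \<omega>) = \<mu>L) \<and>
           (AE \<omega> in M. crit_value (\<lambda>p y. HR p y \<omega>) = \<mu>R) \<and>
           (\<exists>\<Omega>1 \<in> sets M. measure M \<Omega>1 = 1 \<and>
              (\<forall>\<omega> \<in> \<Omega>1. crit_value (\<lambda>p y. H p y \<omega>) = max \<mu>L \<mu>R))"
proof -
  interpret prob_space M by (rule P)
  have tm: "\<And>z. \<tau> z \<in> M \<rightarrow>\<^sub>M M" using tau_meas by blast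
  have tsp: "\<And>z \<omega>. \<omega> \<in> space M \<Longrightarrow> \<tau> z \<omega> \<in> space M" using tm measurable_space by metis
  have HLeq: "\<And>p y \<omega>. \<omega> \<in> space M \<Longrightarrow> y \<le> -1 \<Longrightarrow> HL p y \<omega> = H p y \<omega>"
    using H7(3,5) by simp
  have HReq: "\<And>p y \<omega>. \<omega> \<in> space M \<Longrightarrow> 1 \<le> y \<Longrightarrow> HR p y \<omega> = H p y \<omega>"
    using H7(4,5) by simp
  have HLf: "\<And>p y \<omega>. \<omega> \<in> space M \<Longrightarrow> HL p y \<omega> = H p (-1) (\<tau> (y+1) \<omega>)"
  proof -
    fix p y \<omega> assume sp: "\<omega> \<in> space M"
    have "HL p y \<omega> = HL p (-1 + (y+1)) \<omega>" by simp
    also have "\<dots> = HL p (-1) (\<tau> (y+1) \<omega>)" by (rule H8(1)[OF sp])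
    also have "\<dots> = H p (-1) (\<tau> (y+1) \<omega>)" by (rule HLeq[OF tsp[OF sp]]) simp
    finally show "HL p y \<omega> = H p (-1) (\<tau> (y+1) \<omega>)" .
  qed
  have HRf: "\<And>p y \<omega>. \<omega> \<in> space M \<Longrightarrow> HR p y \<omega> = H p 1 (\<tau> (y-1) \<omega>)"
  proof -
    fix p y \<omega> assume sp: "\<omega> \<in> space M"
    have "HR p y \<omega> = HR p (1 + (y-1)) \<omega>" by simp
    also have "\<dots> = HR p 1 (\<tau> (y-1) \<omega>)" by (rule H8(2)[OF sp])
    also have "\<dots> = H p 1 (\<tau> (y-1) \<omega>)" by (rule HReq[OF tsp[OF sp]]) simp
    finally show "HR p y \<omega> = H p 1 (\<tau> (y-1) \<omega>)" .
  qed
  have H0b: "\<And>y \<omega>. \<omega> \<in> space M \<Longrightarrow> - c0 * \<gamma> \<le> H 0 y \<omega> \<and> H 0 y \<omega> \<le> 0"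
  proof -
    fix y \<omega> assume sp: "\<omega> \<in> space M"
    have "- c0 * \<bar>0 + \<gamma>\<bar> \<le> H 0 y \<omega>" using H2(4)[OF sp] by blast
    moreover have "H (-\<gamma>) y \<omega> \<le> C0 * \<bar>-\<gamma> + \<gamma>\<bar>" using H2(4)[OF sp] by blast
    moreover have "H 0 y \<omega> \<le> H (-\<gamma>) y \<omega>" by (rule H6[OF sp])
    ultimately show "- c0 * \<gamma> \<le> H 0 y \<omega> \<and> H 0 y \<omega> \<le> 0" using H2(3) by simp
  qed
  have Hmod: "\<And>x y \<omega>. \<omega> \<in> space M \<Longrightarrow> \<bar>H 0 y \<omega> - H 0 x \<omega>\<bar> \<le> w \<bar>x - y\<bar>"
    using H4(2) by (metis abs_zero add_0_right mult_1_right)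
  have XLb: "\<And>y \<omega>. \<omega> \<in> space M \<Longrightarrow> - c0 * \<gamma> \<le> HL 0 y \<omega> \<and> HL 0 y \<omega> \<le> 0"
    using HLf H0b tsp by simp
  have XRb: "\<And>y \<omega>. \<omega> \<in> space M \<Longrightarrow> - c0 * \<gamma> \<le> HR 0 y \<omega> \<and> HR 0 y \<omega> \<le> 0"
    using HRf H0b tsp by simp
  have XLmono: "\<And>p y \<omega>. \<omega> \<in> space M \<Longrightarrow> HL 0 y \<omega> \<le> HL p y \<omega>"
    using HLf H6 tsp by simp
  have XRmono: "\<And>p y \<omega>. \<omega> \<in> space M \<Longrightarrow> HR 0 y \<omega> \<le> HR p y \<omega>"
    using HRf H6 tsp by simp
  have XLmod: "\<bar>HL 0 y \<omega> - HL 0 x \<omega>\<bar> \<le> w \<bar>x - y\<bar>" if sp: "\<omega> \<in> space M" for x y \<omega>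
  proof -
    define t where "t = max x y + 1"
    have "HL 0 y \<omega> = HL 0 ((y - t) + t) \<omega>" by simp
    also have "\<dots> = HL 0 (y - t) (\<tau> t \<omega>)" by (rule H8(1)[OF sp])
    also have "\<dots> = H 0 (y - t) (\<tau> t \<omega>)" by (rule HLeq[OF tsp[OF sp]]) (simp add: t_def)
    finally have e1: "HL 0 y \<omega> = H 0 (y - t) (\<tau> t \<omega>)" .
    have "HL 0 x \<omega> = HL 0 ((x - t) + t) \<omega>" by simp
    also have "\<dots> = HL 0 (x - t) (\<tau> t \<omega>)" by (rule H8(1)[OF sp])
    also have "\<dots> = H 0 (x - t) (\<tau> t \<omega>)" by (rule HLeq[OF tsp[OF sp]]) (simp add: t_def)
    finally have e2: "HL 0 x \<omega> = H 0 (x - t) (\<tau> t \<omega>)" .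
    show ?thesis using Hmod[OF tsp[OF sp, of t], of "y - t" "x - t"] e1 e2 by simp
  qed
  have XRmod: "\<bar>HR 0 y \<omega> - HR 0 x \<omega>\<bar> \<le> w \<bar>x - y\<bar>" if sp: "\<omega> \<in> space M" for x y \<omega>
  proof -
    define t where "t = min x y - 1"
    have "HR 0 y \<omega> = HR 0 ((y - t) + t) \<omega>" by simp
    also have "\<dots> = HR 0 (y - t) (\<tau> t \<omega>)" by (rule H8(2)[OF sp])
    also have "\<dots> = H 0 (y - t) (\<tau> t \<omega>)" by (rule HReq[OF tsp[OF sp]]) (simp add: t_def)
    finally have e1: "HR 0 y \<omega> = H 0 (y - t) (\<tau> t \<omega>)" .
    have "HR 0 x \<omega> = HR 0 ((x - t) + t) \<omega>" by simp
    also have "\<dots> = HR 0 (x - t) (\<tau> t \<omega>)" by (rule H8(2)[OF sp])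
    also have "\<dots> = H 0 (x - t) (\<tau> t \<omega>)" by (rule HReq[OF tsp[OF sp]]) (simp add: t_def)
    finally have e2: "HR 0 x \<omega> = H 0 (x - t) (\<tau> t \<omega>)" .
    show ?thesis using Hmod[OF tsp[OF sp, of t], of "y - t" "x - t"] e1 e2 by simp
  qed
  have contL: "\<And>\<omega>. \<omega> \<in> space M \<Longrightarrow> continuous_on UNIV (\<lambda>y. HL 0 y \<omega>)"
  proof (rule modulus_cont[OF H4(1)])
    fix \<omega> and x y :: real assume sp: "\<omega> \<in> space M"
    have e: "\<bar>y - x\<bar> = \<bar>x - y\<bar>" by (rule abs_minus_commute)
    show "\<bar>HL 0 x \<omega> - HL 0 y \<omega>\<bar> \<le> w \<bar>x - y\<bar>"
      using XLmod[OF sp, of y x] e by simp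
  qed
  have contR: "\<And>\<omega>. \<omega> \<in> space M \<Longrightarrow> continuous_on UNIV (\<lambda>y. HR 0 y \<omega>)"
  proof (rule modulus_cont[OF H4(1)])
    fix \<omega> and x y :: real assume sp: "\<omega> \<in> space M"
    have e: "\<bar>y - x\<bar> = \<bar>x - y\<bar>" by (rule abs_minus_commute)
    show "\<bar>HR 0 x \<omega> - HR 0 y \<omega>\<bar> \<le> w \<bar>x - y\<bar>"
      using XRmod[OF sp, of y x] e by simp
  qed
  have contR': "\<And>\<omega>. \<omega> \<in> space M \<Longrightarrow> continuous_on UNIV (\<lambda>y. HR 0 (-y) \<omega>)"
  proof (rule modulus_cont[OF H4(1)])
    fix \<omega> and x y :: real assume sp: "\<omega> \<in> space M"
    have e: "\<bar>-y - -x\<bar> = \<bar>x - y\<bar>" by simp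
    show "\<bar>HR 0 (-x) \<omega> - HR 0 (-y) \<omega>\<bar> \<le> w \<bar>x - y\<bar>"
      using XRmod[OF sp, of "-x" "-y"] abs_minus_commute[of x y] by simp
  qed
  have contH: "\<And>\<omega>. \<omega> \<in> space M \<Longrightarrow> continuous_on UNIV (\<lambda>y. H 0 y \<omega>)"
  proof (rule modulus_cont[OF H4(1)])
    fix \<omega> and x y :: real assume sp: "\<omega> \<in> space M"
    have e: "\<bar>y - x\<bar> = \<bar>x - y\<bar>" by (rule abs_minus_commute)
    show "\<bar>H 0 x \<omega> - H 0 y \<omega>\<bar> \<le> w \<bar>x - y\<bar>"
      using Hmod[OF sp, of y x] e by simp
  qed
  have pm: "\<And>y::real. (\<lambda>\<omega>. (0::real, y, \<omega>)) \<in> M \<rightarrow>\<^sub>M borel \<Otimes>\<^sub>M borel \<Otimes>\<^sub>M M" by measurable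
  have measXL: "\<And>y. (\<lambda>\<omega>. HL 0 y \<omega>) \<in> borel_measurable M"
    using measurable_compose[OF pm measL] by simp
  have measXR: "\<And>y. (\<lambda>\<omega>. HR 0 y \<omega>) \<in> borel_measurable M"
    using measurable_compose[OF pm measR] by simp
  obtain mL where mL: "AE \<omega> in M. (SUP y. HL 0 y \<omega>) = mL" "AE \<omega> in M. (SUP y\<in>{..-1}. HL 0 y \<omega>) = mL"
    using stat_sup[where X="\<lambda>y \<omega>. HL 0 y \<omega>", OF P tau_meas ergodic H8(1) measXL contL XLb] by blast
  have ergodic': "measure M A = 0 \<or> measure M A = 1" if "A \<in> sets M" "\<forall>z. \<tau> (-z) -` A \<inter> space M = A" for A
  proof (rule ergodic[OF that(1)], intro allI)
    fix z show "\<tau> z -` A \<inter> space M = A" using that(2)[rule_format, of "-z"] by simp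
  qed
  have statR': "HR 0 (-(y + z)) \<omega> = HR 0 (-y) (\<tau> (-z) \<omega>)" if sp: "\<omega> \<in> space M" for y z \<omega>
    using H8(2)[OF sp, of 0 "-y" "-z"] by simp
  obtain mR where mR': "AE \<omega> in M. (SUP y. HR 0 (-y) \<omega>) = mR" "AE \<omega> in M. (SUP y\<in>{..-1}. HR 0 (-y) \<omega>) = mR"
    using stat_sup[where \<tau>="\<lambda>z. \<tau> (-z)" and X="\<lambda>y \<omega>. HR 0 (-y) \<omega>", OF P tau_meas ergodic' statR' measXR contR' XRb] by blast
  have imR1: "range (\<lambda>y. HR 0 (-y) \<omega>) = range (\<lambda>y. HR 0 y \<omega>)" for \<omega>
  proof -
    have "range (\<lambda>y. HR 0 (-y) \<omega>) = (\<lambda>y. HR 0 y \<omega>) ` range uminus" by (simp only: image_image)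
    then show ?thesis by simp
  qed
  have imR2: "(\<lambda>y. HR 0 (-y) \<omega>) ` {..-1} = (\<lambda>y. HR 0 y \<omega>) ` {1..}" for \<omega>
  proof -
    have "(\<lambda>y. HR 0 (-y) \<omega>) ` {..-1} = (\<lambda>y. HR 0 y \<omega>) ` (uminus ` {..-1})" by (simp only: image_image)
    also have "uminus ` {..-1::real} = {1..}"
    proof (intro set_eqI iffI)
      fix x :: real assume "x \<in> {1..}" then show "x \<in> uminus ` {..-1}" by (intro image_eqI[of _ _ "-x"]) auto
    qed auto
    finally show ?thesis .
  qed
  have mR: "AE \<omega> in M. (SUP y. HR 0 y \<omega>) = mR" "AE \<omega> in M. (SUP y\<in>{1..}. HR 0 y \<omega>) = mR"
    using mR' imR1 imR2 by simp_all
  have critL: "crit_value (\<lambda>p y. HL p y \<omega>) = (SUP y. HL 0 y \<omega>)" if sp: "\<omega> \<in> space M" for \<omega>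
    by (intro crit_value_eq XLmono[OF sp] contL[OF sp] bdd_aboveI2[where M=0]) (use XLb[OF sp] in auto)
  have critR: "crit_value (\<lambda>p y. HR p y \<omega>) = (SUP y. HR 0 y \<omega>)" if sp: "\<omega> \<in> space M" for \<omega>
    by (intro crit_value_eq XRmono[OF sp] contR[OF sp] bdd_aboveI2[where M=0]) (use XRb[OF sp] in auto)
  have critH: "crit_value (\<lambda>p y. H p y \<omega>) = (SUP y. H 0 y \<omega>)" if sp: "\<omega> \<in> space M" for \<omega>
    by (intro crit_value_eq H6[OF sp] contH[OF sp] bdd_aboveI2[where M=0]) (use H0b[OF sp] in auto)
  have phib: "0 \<le> \<phi> y \<and> \<phi> y \<le> 1" for y
  proof -
    have a1: "\<phi> 1 \<le> \<phi> y" if "y \<le> 1" using H7(2) that unfolding antimono_def by blast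
    have a2: "\<phi> y \<le> \<phi> (-1)" if "-1 \<le> y" using H7(2) that unfolding antimono_def by blast
    show ?thesis
    proof (cases "y \<le> -1")
      case True then show ?thesis using H7(3) by simp
    next
      case F1: False
      show ?thesis
      proof (cases "1 \<le> y")
        case True then show ?thesis using H7(4) by simp
      next
        case False then show ?thesis using a1 a2 F1 H7(3)[of "-1"] H7(4)[of 1] by simp
      qed
    qed
  qed
  have key: "crit_value (\<lambda>p y. H p y \<omega>) = max mL mR"
    if sp: "\<omega> \<in> space M" and e1: "(SUP y. HL 0 y \<omega>) = mL" and e2: "(SUP y\<in>{..-1}. HL 0 y \<omega>) = mL"
      and e3: "(SUP y. HR 0 y \<omega>) = mR" and e4: "(SUP y\<in>{1..}. HR 0 y \<omega>) = mR" for \<omega>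
  proof -
    have bL: "bdd_above ((\<lambda>y. HL 0 y \<omega>) ` S)" for S using XLb[OF sp] by (intro bdd_aboveI2) blast
    have bR: "bdd_above ((\<lambda>y. HR 0 y \<omega>) ` S)" for S using XRb[OF sp] by (intro bdd_aboveI2) blast
    have bH: "bdd_above ((\<lambda>y. H 0 y \<omega>) ` S)" for S using H0b[OF sp] by (intro bdd_aboveI2) blast
    have le1: "(SUP y. H 0 y \<omega>) \<le> max mL mR"
    proof (rule cSUP_least)
      fix y
      have hl: "HL 0 y \<omega> \<le> mL" using cSUP_upper[OF _ bL, of y UNIV] e1 by simp
      have hr: "HR 0 y \<omega> \<le> mR" using cSUP_upper[OF _ bR, of y UNIV] e3 by simp
      have "\<phi> y * HL 0 y \<omega> \<le> \<phi> y * max mL mR" using hl phib[of y] by (intro mult_left_mono) auto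
      moreover have "(1 - \<phi> y) * HR 0 y \<omega> \<le> (1 - \<phi> y) * max mL mR" using hr phib[of y] by (intro mult_left_mono) auto
      ultimately have "\<phi> y * HL 0 y \<omega> + (1 - \<phi> y) * HR 0 y \<omega> \<le> max mL mR" by (simp add: algebra_simps)
      then show "H 0 y \<omega> \<le> max mL mR" using H7(5)[OF sp] by simp
    qed simp
    have le2: "mL \<le> (SUP y. H 0 y \<omega>)"
      unfolding e2[symmetric] by (rule cSUP_subset_mono[OF _ bH]) (auto simp: HLeq[OF sp])
    have le3: "mR \<le> (SUP y. H 0 y \<omega>)"
      unfolding e4[symmetric] by (rule cSUP_subset_mono[OF _ bH]) (auto simp: HReq[OF sp])
    show ?thesis using critH[OF sp] le1 le2 le3 by simp
  qed
  have AEall: "AE \<omega> in M. (SUP y. HL 0 y \<omega>) = mL \<and> (SUP y\<in>{..-1}. HL 0 y \<omega>) = mL \<and>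
      (SUP y. HR 0 y \<omega>) = mR \<and> (SUP y\<in>{1..}. HR 0 y \<omega>) = mR"
    using mL mR by (simp add: AE_conj_iff)
  show ?thesis
  proof (intro exI conjI)
    show "AE \<omega> in M. crit_value (\<lambda>p y. HL p y \<omega>) = mL"
      using AE_conj_iff[THEN iffD2, OF conjI[OF mL(1) AE_space]] by (rule AE_mp) (auto intro!: AE_I2 simp: critL)
    show "AE \<omega> in M. crit_value (\<lambda>p y. HR p y \<omega>) = mR"
      using AE_conj_iff[THEN iffD2, OF conjI[OF mR(1) AE_space]] by (rule AE_mp) (auto intro!: AE_I2 simp: critR)
    from AEall obtain N where N: "{x \<in> space M. \<not> ((SUP y. HL 0 y x) = mL \<and> (SUP y\<in>{..-1}. HL 0 y x) = mL \<and>
      (SUP y. HR 0 y x) = mR \<and> (SUP y\<in>{1..}. HR 0 y x) = mR)} \<subseteq> N" "emeasure M N = 0" "N \<in> sets M"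
      by (rule AE_E)
    have pN: "measure M N = 0" using N(2) by (simp add: measure_def)
    show "\<exists>\<Omega>1\<in>sets M. measure M \<Omega>1 = 1 \<and> (\<forall>\<omega>\<in>\<Omega>1. crit_value (\<lambda>p y. H p y \<omega>) = max mL mR)"
    proof (intro bexI[of _ "space M - N"] conjI ballI)
      show "space M - N \<in> sets M" using N(3) by blast
      show "measure M (space M - N) = 1" using prob_compl[OF N(3)] pN by simp
      fix \<omega> assume "\<omega> \<in> space M - N"
      then have sp: "\<omega> \<in> space M" and nN: "\<omega> \<notin> N" by auto
      then have "(SUP y. HL 0 y \<omega>) = mL \<and> (SUP y\<in>{..-1}. HL 0 y \<omega>) = mL \<and>
        (SUP y. HR 0 y \<omega>) = mR \<and> (SUP y\<in>{1..}. HR 0 y \<omega>) = mR" using N(1) by blast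
      then show "crit_value (\<lambda>p y. H p y \<omega>) = max mL mR" using key[OF sp] by blast
    qed
  qed
qed


end
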